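(* Let $\Bbbk$ be a field and let $B$ be a filtered bialgebra over $\Bbbk$ (filtration $B_0\subset B_1\subset\cdots$, $\bigcup_nB_n=B$). Suppose chosen subspaces $B(0):=B_0$ and, for $i\ge0$, $B(i+1)\subset\operatorname{Ker}\epsilon$ with $B_{i+1}=B_i\oplus B(i+1)$, and suppose $C\subset B$ is a basis of $B$ such that: $1\in C$; $xy\in C$ for all $x,y\in C$; every element of $C$ lies in some $B(n)$; for every $x\in C$, $\Delta(x)$ is a sum of terms $a\otimes b$ with $a,b\in C$; and for every $x\in C\cap B(n)$ the projections $\Delta_{0,n}(x)$ and $\Delta_{n,0}(x)$ of $\Delta(x)$ onto $B(0)\otimes B(n)$ and $B(n)\otimes B(0)$ are of the form $\Delta_{0,n}(x)=\operatorname{in}(x)\otimes x$ and $\Delta_{n,0}(x)=x\otimes\operatorname{out}(x)$ with $\operatorname{in}(x),\operatorname{out}(x)\in C$ group-like. Let $C_0:=C\cap B_0$. Then for all $x,y\in C$, if $xy\in C_0$ then $x\in C_0$ and $y\in C_0$.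
   Context: A filtered bialgebra is a bialgebra $(B,m,1,\Delta,\epsilon)$ with an increasing sequence of subspaces $B_0\subset B_1\subset\cdots$, $\bigcup_n B_n=B$, such that $1\in B_0$, $B_iB_j\subset B_{i+j}$ and $\Delta(B_n)\subset\sum_{i+j=n}B_i\otimes B_j$. An element $x\ne0$ is group-like if $\Delta(x)=x\otimes x$. *)

theory Defs
  imports Complex_Main
begin

text \<open>
  The ground field is a type 'k of class field; the bialgebra B is a
  type 'b of class ring_1 (its multiplication and unit), made into a 'k-vector space
  by a scalar multiplication sc.  Since there is no library tensor product, an element
  of B (x) B is represented through its canonical (injective) image in the dual of
  B* (x) B*: a tensor t is the function (f, g) |-> t(f, g) on pairs of linear
  functionals, and a pure tensor a (x) b is (f, g) |-> f a * g b.  Two such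
  representatives are identified (teq) when they agree on all pairs of linear
  functionals; values on non-linear functions are irrelevant junk.
\<close>

type_synonym ('k, 'b) tensor = "('b \<Rightarrow> 'k) \<Rightarrow> ('b \<Rightarrow> 'k) \<Rightarrow> 'k"

definition lin_fun :: "('k::field \<Rightarrow> 'b::ab_group_add \<Rightarrow> 'b) \<Rightarrow> ('b \<Rightarrow> 'k) \<Rightarrow> bool" where
  "lin_fun sc f \<longleftrightarrow> Vector_Spaces.linear sc (*) f"

definition tsum :: "('b \<times> 'b) list \<Rightarrow> ('k::comm_ring_1, 'b) tensor" where
  "tsum L = (\<lambda>f g. \<Sum>(a, b) \<leftarrow> L. f a * g b)"

definition tens :: "'b \<Rightarrow> 'b \<Rightarrow> ('k::comm_ring_1, 'b) tensor" where
  "tens a b = tsum [(a, b)]"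

definition teq :: "('k::field \<Rightarrow> 'b::ab_group_add \<Rightarrow> 'b) \<Rightarrow> ('k, 'b) tensor \<Rightarrow> ('k, 'b) tensor \<Rightarrow> bool" where
  "teq sc s t \<longleftrightarrow> (\<forall>f g. lin_fun sc f \<longrightarrow> lin_fun sc g \<longrightarrow> s f g = t f g)"

definition bialgebra ::
  "('k::field \<Rightarrow> 'b::ring_1 \<Rightarrow> 'b) \<Rightarrow> ('b \<Rightarrow> ('k, 'b) tensor) \<Rightarrow> ('b \<Rightarrow> 'k) \<Rightarrow> bool" where
  "bialgebra sc \<Delta> \<epsilon> \<longleftrightarrow>
     vector_space sc \<and>
     (\<forall>c x y. sc c (x * y) = sc c x * y \<and> sc c (x * y) = x * sc c y) \<and>
     \<comment> \<open>Delta maps B into B (x) B and is linear\<close>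
     (\<forall>x. \<exists>L. teq sc (\<Delta> x) (tsum L)) \<and>
     (\<forall>f g. lin_fun sc f \<longrightarrow> lin_fun sc g \<longrightarrow> lin_fun sc (\<lambda>x. \<Delta> x f g)) \<and>
     \<comment> \<open>coassociativity: (Delta (x) id) Delta = (id (x) Delta) Delta\<close>
     (\<forall>x f g h. lin_fun sc f \<longrightarrow> lin_fun sc g \<longrightarrow> lin_fun sc h \<longrightarrow>
        \<Delta> x (\<lambda>a. \<Delta> a f g) h = \<Delta> x f (\<lambda>b. \<Delta> b g h)) \<and>
     \<comment> \<open>counit\<close>
     lin_fun sc \<epsilon> \<and>
     (\<forall>x f. lin_fun sc f \<longrightarrow> \<Delta> x \<epsilon> f = f x \<and> \<Delta> x f \<epsilon> = f x) \<and>
     \<comment> \<open>Delta and epsilon are algebra maps\<close>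
     (\<forall>x y L M. teq sc (\<Delta> x) (tsum L) \<longrightarrow> teq sc (\<Delta> y) (tsum M) \<longrightarrow>
        teq sc (\<Delta> (x * y)) (tsum [(a * c, b * d). (a, b) \<leftarrow> L, (c, d) \<leftarrow> M])) \<and>
     teq sc (\<Delta> 1) (tens 1 1) \<and>
     (\<forall>x y. \<epsilon> (x * y) = \<epsilon> x * \<epsilon> y) \<and> \<epsilon> 1 = 1"

definition filtered_bialgebra ::
  "('k::field \<Rightarrow> 'b::ring_1 \<Rightarrow> 'b) \<Rightarrow> ('b \<Rightarrow> ('k, 'b) tensor) \<Rightarrow> ('b \<Rightarrow> 'k) \<Rightarrow> (nat \<Rightarrow> 'b set) \<Rightarrow> bool" where
  "filtered_bialgebra sc \<Delta> \<epsilon> Fil \<longleftrightarrow>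
     bialgebra sc \<Delta> \<epsilon> \<and>
     (\<forall>n. module.subspace sc (Fil n)) \<and>
     (\<forall>n. Fil n \<subseteq> Fil (Suc n)) \<and>
     (\<Union>n. Fil n) = UNIV \<and>
     1 \<in> Fil 0 \<and>
     (\<forall>i j. \<forall>x\<in>Fil i. \<forall>y\<in>Fil j. x * y \<in> Fil (i + j)) \<and>
     (\<forall>n. \<forall>x\<in>Fil n. \<exists>L. teq sc (\<Delta> x) (tsum L) \<and>
        (\<forall>(a, b)\<in>set L. \<exists>i j. i + j = n \<and> a \<in> Fil i \<and> b \<in> Fil j))"

definition filtration_splitting ::
  "('k::field \<Rightarrow> 'b::ring_1 \<Rightarrow> 'b) \<Rightarrow> ('b \<Rightarrow> 'k) \<Rightarrow> (nat \<Rightarrow> 'b set) \<Rightarrow> (nat \<Rightarrow> 'b set) \<Rightarrow> bool" where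
  "filtration_splitting sc \<epsilon> Fil D \<longleftrightarrow>
     D 0 = Fil 0 \<and>
     (\<forall>i. module.subspace sc (D (Suc i)) \<and>
          D (Suc i) \<subseteq> {x. \<epsilon> x = 0} \<and>
          Fil i \<inter> D (Suc i) = {0} \<and>
          Fil (Suc i) = {a + b | a b. a \<in> Fil i \<and> b \<in> D (Suc i)})"

definition dproj :: "('k::field \<Rightarrow> 'b::ab_group_add \<Rightarrow> 'b) \<Rightarrow> (nat \<Rightarrow> 'b set) \<Rightarrow> nat \<Rightarrow> 'b \<Rightarrow> 'b" where
  "dproj sc D i v = (THE w. w \<in> D i \<and> v - w \<in> module.span sc (\<Union>j\<in>-{i}. D j))"

text \<open>Projection of B (x) B onto B(i) (x) B(j), i.e. dproj_i (x) dproj_j.\<close>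
definition tproj :: "('k::field \<Rightarrow> 'b::ab_group_add \<Rightarrow> 'b) \<Rightarrow> (nat \<Rightarrow> 'b set) \<Rightarrow> nat \<Rightarrow> nat \<Rightarrow>
    ('k, 'b) tensor \<Rightarrow> ('k, 'b) tensor" where
  "tproj sc D i j t = (\<lambda>f g. t (f \<circ> dproj sc D i) (g \<circ> dproj sc D j))"

definition grouplike :: "('k::field \<Rightarrow> 'b::ring_1 \<Rightarrow> 'b) \<Rightarrow> ('b \<Rightarrow> ('k, 'b) tensor) \<Rightarrow> 'b \<Rightarrow> bool" where
  "grouplike sc \<Delta> x \<longleftrightarrow> x \<noteq> 0 \<and> teq sc (\<Delta> x) (tens x x)"

end

theory Submission
  imports Defs
begin

theorem lemma4p2:
  fixes sc :: "'k::field \<Rightarrow> 'b::ring_1 \<Rightarrow> 'b"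
    and \<Delta> :: "'b \<Rightarrow> ('k, 'b) tensor"
    and \<epsilon> :: "'b \<Rightarrow> 'k"
    and Fil D :: "nat \<Rightarrow> 'b set"
    and C :: "'b set"
  assumes filt: "filtered_bialgebra sc \<Delta> \<epsilon> Fil"
    and split: "filtration_splitting sc \<epsilon> Fil D"
    and basis_indep: "\<not> module.dependent sc C"
    and basis_span: "module.span sc C = UNIV"
    and one_C: "1 \<in> C"
    and mult_C: "\<forall>x\<in>C. \<forall>y\<in>C. x * y \<in> C"
    and graded_C: "\<forall>x\<in>C. \<exists>n. x \<in> D n"
    and coprod_C: "\<forall>x\<in>C. \<exists>L. set L \<subseteq> C \<times> C \<and> teq sc (\<Delta> x) (tsum L)"
    and in_out: "\<forall>n. \<forall>x\<in>C \<inter> D n. \<exists>g h. g \<in> C \<and> h \<in> C \<and>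
                    grouplike sc \<Delta> g \<and> grouplike sc \<Delta> h \<and>
                    teq sc (tproj sc D 0 n (\<Delta> x)) (tens g x) \<and>
                    teq sc (tproj sc D n 0 (\<Delta> x)) (tens x h)"
  shows "\<forall>x\<in>C. \<forall>y\<in>C. x * y \<in> C \<inter> Fil 0 \<longrightarrow> x \<in> C \<inter> Fil 0 \<and> y \<in> C \<inter> Fil 0"
proof -
  have bi: "bialgebra sc \<Delta> \<epsilon>" using filt by (simp add: filtered_bialgebra_def)
  have vsp: "vector_space sc" using bi by (simp add: bialgebra_def)
  interpret vs: vector_space sc by (rule vsp)
  have eps_lin: "lin_fun sc \<epsilon>" using bi by (simp add: bialgebra_def)
  have counit: "\<And>x f. lin_fun sc f \<Longrightarrow> \<Delta> x \<epsilon> f = f x" using bi by (simp add: bialgebra_def)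
  have eps_mult: "\<And>x y. \<epsilon> (x * y) = \<epsilon> x * \<epsilon> y" using bi by (simp add: bialgebra_def)
  have Fsub: "\<And>n. vs.subspace (Fil n)" using filt by (simp add: filtered_bialgebra_def)
  have Fmono1: "\<And>n. Fil n \<subseteq> Fil (Suc n)" using filt by (simp add: filtered_bialgebra_def)
  have Fmono: "\<And>m n. m \<le> n \<Longrightarrow> Fil m \<subseteq> Fil n"
    by (rule lift_Suc_mono_le[of Fil]) (use Fmono1 in auto)
  have Fun: "(\<Union>n. Fil n) = UNIV" using filt by (simp add: filtered_bialgebra_def)
  have Fcop: "\<And>n x. x \<in> Fil n \<Longrightarrow> \<exists>L. teq sc (\<Delta> x) (tsum L) \<and>
        (\<forall>(a, b)\<in>set L. \<exists>i j. i + j = n \<and> a \<in> Fil i \<and> b \<in> Fil j)"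
    using filt by (simp add: filtered_bialgebra_def)
  have D0: "D 0 = Fil 0" using split by (simp add: filtration_splitting_def)
  have Dsub: "\<And>i. vs.subspace (D (Suc i))" using split by (simp add: filtration_splitting_def)
  have Deps: "\<And>i x. x \<in> D (Suc i) \<Longrightarrow> \<epsilon> x = 0" using split by (auto simp add: filtration_splitting_def)
  have Dint: "\<And>i. Fil i \<inter> D (Suc i) = {0}" using split by (simp add: filtration_splitting_def)
  have Dsum: "\<And>i. Fil (Suc i) = {a + b | a b. a \<in> Fil i \<and> b \<in> D (Suc i)}"
    using split by (simp add: filtration_splitting_def)
  have DF: "\<And>i. D (Suc i) \<subseteq> Fil (Suc i)"
  proof
    fix i x assume "x \<in> D (Suc i)"
    moreover have "0 \<in> Fil i" using Fsub vs.subspace_0 by blast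
    ultimately have "0 + x \<in> Fil (Suc i)" by (subst Dsum) blast
    then show "x \<in> Fil (Suc i)" by simp
  qed
  define S where "S = vs.span (\<Union>j\<in>-{0}. D j)"
  define T where "T N = vs.span (\<Union>j\<in>{1..N}. D j)" for N
  have TF: "T N \<subseteq> Fil N" for N
    unfolding T_def
  proof (rule vs.span_minimal[OF _ Fsub])
    show "(\<Union>j\<in>{1..N}. D j) \<subseteq> Fil N"
    proof safe
      fix j x assume j: "j \<in> {1..N}" and x: "x \<in> D j"
      then obtain i where i: "j = Suc i" by (cases j) auto
      show "x \<in> Fil N" using DF[of i] Fmono[of j N] j x i by auto
    qed
  qed
  have T0: "Fil 0 \<inter> T N \<subseteq> {0}" for N
  proof (induction N)
    case 0
    then show ?case by (simp add: T_def)
  next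
    case (Suc N)
    show ?case
    proof
      fix w assume w: "w \<in> Fil 0 \<inter> T (Suc N)"
      have "(\<Union>j\<in>{1..Suc N}. D j) = (\<Union>j\<in>{1..N}. D j) \<union> D (Suc N)"
        apply (auto simp: le_Suc_eq) by (meson atLeastAtMost_iff le_refl Suc_le_mono le0)
      then have "T (Suc N) = {x + y | x y. x \<in> T N \<and> y \<in> vs.span (D (Suc N))}"
        unfolding T_def by (simp add: vs.span_Un)
      moreover have "vs.span (D (Suc N)) = D (Suc N)" using Dsub by simp
      ultimately obtain t d where t: "t \<in> T N" and d: "d \<in> D (Suc N)" and wtd: "w = t + d"
        using w by auto
      have "w \<in> Fil N" using w Fmono[of 0 N] by auto
      moreover have "t \<in> Fil N" using TF t by auto
      ultimately have "d \<in> Fil N" using wtd vs.subspace_diff[OF Fsub[of N], of w t] by simp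
      then have "d = 0" using Dint[of N] d by auto
      then have "w \<in> Fil 0 \<inter> T N" using w wtd t by simp
      then show "w \<in> {0}" using Suc.IH by auto
    qed
  qed
  have Tmono: "M \<le> N \<Longrightarrow> T M \<subseteq> T N" for M N
    unfolding T_def apply (rule vs.span_mono) apply auto by (meson atLeastAtMost_iff order.trans)
  have ST: "s \<in> S \<Longrightarrow> \<exists>N. s \<in> T N" for s
    unfolding S_def
  proof (induction rule: vs.span_induct_alt)
    case base
    then show ?case by (auto simp: T_def vs.span_zero)
  next
    case (step c x y)
    then obtain N where N: "y \<in> T N" by auto
    from step(1) obtain j where j: "j \<noteq> 0" "x \<in> D j" by auto
    have "x \<in> T j" unfolding T_def using j by (intro vs.span_base) auto
    then have "x \<in> T (max N j)" using Tmono[of j "max N j"] by auto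
    moreover have "y \<in> T (max N j)" using N Tmono[of N "max N j"] by auto
    ultimately have "sc c x + y \<in> T (max N j)"
      unfolding T_def by (intro vs.span_add vs.span_scale)
    then show ?case by blast
  qed
  have DS0: "w \<in> D 0 \<Longrightarrow> w \<in> S \<Longrightarrow> w = 0" for w
    using ST[of w] T0 D0 by blast
  have Ssub: "vs.subspace S" unfolding S_def by simp
  have D0sub: "vs.subspace (D 0)" using D0 Fsub by simp
  have DjS: "\<And>i x. x \<in> D (Suc i) \<Longrightarrow> x \<in> S"
    unfolding S_def by (intro vs.span_base) auto
  have ex: "\<exists>w\<in>D 0. v - w \<in> S" if "v \<in> Fil n" for v n
    using that
  proof (induction n arbitrary: v)
    case 0
    then show ?case using D0 vs.subspace_0[OF Ssub] by (intro bexI[of _ v]) auto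
  next
    case (Suc n)
    then obtain a b where ab: "a \<in> Fil n" "b \<in> D (Suc n)" "v = a + b" using Dsum by blast
    then obtain w where w: "w \<in> D 0" "a - w \<in> S" using Suc.IH by blast
    have "(a - w) + b \<in> S" using w ab DjS vs.subspace_add[OF Ssub] by blast
    then show ?case using w ab by (auto simp: algebra_simps)
  qed
  have ex1: "\<exists>!w. w \<in> D 0 \<and> v - w \<in> S" for v
  proof -
    obtain n where "v \<in> Fil n" using Fun by blast
    then obtain w where w: "w \<in> D 0" "v - w \<in> S" using ex by blast
    show ?thesis
    proof (rule ex1I[of _ w])
      show "w \<in> D 0 \<and> v - w \<in> S" using w by simp
    next
      fix w' assume w': "w' \<in> D 0 \<and> v - w' \<in> S"
      have "w' - w \<in> D 0" using w w' vs.subspace_diff[OF D0sub] by blast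
      moreover have "(v - w) - (v - w') \<in> S" using w w' vs.subspace_diff[OF Ssub] by blast
      ultimately show "w' = w" using DS0[of "w' - w"] by (simp add: algebra_simps)
    qed
  qed
  define P where "P = dproj sc D 0"
  have Pchar: "P v = (THE w. w \<in> D 0 \<and> v - w \<in> S)" for v
    unfolding P_def dproj_def S_def by simp
  have Pprop: "P v \<in> D 0 \<and> v - P v \<in> S" for v
    unfolding Pchar by (rule theI'[OF ex1])
  have Puniq: "w \<in> D 0 \<Longrightarrow> v - w \<in> S \<Longrightarrow> P v = w" for v w
    unfolding Pchar by (rule the1_equality[OF ex1]) simp
  have Pid: "a \<in> D 0 \<Longrightarrow> P a = a" for a
    by (rule Puniq) (auto simp: vs.subspace_0[OF Ssub])
  have Plin: "Vector_Spaces.linear sc sc P"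
    unfolding Vector_Spaces.linear_iff
  proof (intro conjI allI vsp)
    fix x y
    show "P (x + y) = P x + P y"
    proof (rule Puniq)
      show "P x + P y \<in> D 0" by (rule vs.subspace_add[OF D0sub]) (simp_all add: Pprop)
      have "(x - P x) + (y - P y) \<in> S" by (rule vs.subspace_add[OF Ssub]) (simp_all add: Pprop)
      then show "x + y - (P x + P y) \<in> S" by (simp add: algebra_simps)
    qed
  next
    fix c x
    show "P (sc c x) = sc c (P x)"
    proof (rule Puniq)
      show "sc c (P x) \<in> D 0" by (rule vs.subspace_scale[OF D0sub]) (simp add: Pprop)
      have "sc c (x - P x) \<in> S" by (rule vs.subspace_scale[OF Ssub]) (simp add: Pprop)
      then show "sc c x - sc c (P x) \<in> S" by (simp add: vs.scale_right_diff_distrib)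
    qed
  qed
  have compP: "lin_fun sc f \<Longrightarrow> lin_fun sc (f \<circ> P)" for f
    unfolding lin_fun_def by (rule Vector_Spaces.linear_compose[OF Plin])
  have tens_ev: "tens a b f g = f a * g b" for a b and f g :: "'b \<Rightarrow> 'k"
    by (simp add: tens_def tsum_def)
  have key: "\<epsilon> z \<noteq> 0" if z: "z \<in> C" "z \<in> Fil 0" for z
  proof -
    have zD: "z \<in> C \<inter> D 0" using z D0 by simp
    obtain g h where gh: "teq sc (tproj sc D 0 0 (\<Delta> z)) (tens z h)"
      using in_out zD by blast
    define r where "r v = vs.representation C v z" for v
    have rlin: "lin_fun sc r"
      unfolding lin_fun_def r_def using vs.linear_representation[OF basis_indep basis_span] .
    have rz: "r z = 1" unfolding r_def using vs.representation_basis[OF basis_indep z(1)] by simp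
    obtain L where L: "teq sc (\<Delta> z) (tsum L)"
      and Lp: "\<forall>(a, b)\<in>set L. \<exists>i j. i + j = 0 \<and> a \<in> Fil i \<and> b \<in> Fil j"
      using Fcop[OF z(2)] by blast
    have "tproj sc D 0 0 (\<Delta> z) \<epsilon> r = \<Delta> z (\<epsilon> \<circ> P) (r \<circ> P)"
      by (simp add: tproj_def P_def)
    also have "\<dots> = tsum L (\<epsilon> \<circ> P) (r \<circ> P)"
      using L compP[OF eps_lin] compP[OF rlin] by (simp add: teq_def)
    also have "\<dots> = tsum L \<epsilon> r"
      unfolding tsum_def
    proof (rule arg_cong[where f=sum_list], rule map_cong[OF refl])
      fix p assume "p \<in> set L"
      then obtain a b where p: "p = (a, b)" "a \<in> D 0" "b \<in> D 0" using Lp D0 by fastforce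
      then show "(case p of (a, b) \<Rightarrow> (\<epsilon> \<circ> P) a * (r \<circ> P) b) = (case p of (a, b) \<Rightarrow> \<epsilon> a * r b)"
        by (simp add: Pid)
    qed
    also have "\<dots> = \<Delta> z \<epsilon> r" using L eps_lin rlin by (simp add: teq_def)
    also have "\<dots> = 1" using counit[OF rlin] rz by simp
    finally have "tproj sc D 0 0 (\<Delta> z) \<epsilon> r = 1" .
    moreover have "tproj sc D 0 0 (\<Delta> z) \<epsilon> r = \<epsilon> z * r h"
      using gh eps_lin rlin by (simp add: teq_def tens_ev)
    ultimately show ?thesis by auto
  qed
  have inF: "x \<in> Fil 0" if "x \<in> C" "\<epsilon> x \<noteq> 0" for x
  proof -
    have "\<exists>n. x \<in> D n" using graded_C that(1) by (rule bspec)
    then obtain n where n: "x \<in> D n" by (rule exE)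
    show ?thesis
    proof (cases n)
      case 0 then show ?thesis using n D0 by simp
    next
      case (Suc i) then have "\<epsilon> x = 0" using n Deps by simp
      then show ?thesis using that(2) by simp
    qed
  qed
  show ?thesis
  proof (intro ballI impI)
    fix x y assume xy: "x \<in> C" "y \<in> C" "x * y \<in> C \<inter> Fil 0"
    have "\<epsilon> (x * y) \<noteq> 0" using key[of "x * y"] xy(3) by blast
    then have "\<epsilon> x \<noteq> 0" "\<epsilon> y \<noteq> 0" unfolding eps_mult by auto
    then show "x \<in> C \<inter> Fil 0 \<and> y \<in> C \<inter> Fil 0" using inF xy(1,2) by blast
  qed
qed

end
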